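(* (a) Let $(A,\succ_A,\prec_A,\omega)$ be a quadratic anti-pre-Leibniz algebra. Then $\omega$ is a nondegenerate skew-symmetric $2$-cocycle on the sub-adjacent Leibniz algebra $(A,\circ_A)$, $\circ_A=\succ_A+\prec_A$. (b) Conversely, let $\omega$ be a nondegenerate skew-symmetric $2$-cocycle on a Leibniz algebra $(A,\circ_A)$, and let $\succ_A,\prec_A$ be defined by $\omega(x\succ_A y,z)=\omega(y,x\circ_A z)$ and $\omega(x\prec_A y,z)=-\omega(x,y\circ_A z+z\circ_A y)$. Then $(A,\succ_A,\prec_A)$ is an anti-pre-Leibniz algebra and $\omega$ is invariant on it, i.e. $(A,\succ_A,\prec_A,\omega)$ is a quadratic anti-pre-Leibniz algebra.
   Context: All vector spaces are finite-dimensional over a field $\mathbb K$ of characteristic zero. A Leibniz algebra is a vector space $A$ with multiplication $\circ_A$ satisfying $x\circ_A(y\circ_A z)=(x\circ_A y)\circ_A z+y\circ_A(x\circ_A z)$. A bilinear form $\omega$ on $(A,\circ_A)$ is a $2$-cocycle if $\omega(z,x\circ_A y)=\omega(x,y\circ_A z+z\circ_A y)-\omega(y,x\circ_A z)$ for all $x,y,z$. An anti-pre-Leibniz algebra is a vector space $A$ with multiplications $\succ_A,\prec_A$ such that, with $x\circ_A y=x\succ_A y+x\prec_A y$, for all $x,y,z$: (AL1) $(x\circ_A y)\prec_A z=x\succ_A(y\circ_A z)-y\succ_A(x\circ_A z)$; (AL2) $(x\circ_A y)\succ_A z=y\succ_A(x\succ_A z)-x\succ_A(y\succ_A z)$; (AL3)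 $x\prec_A(y\circ_A z)=(y\succ_A x)\prec_A z-y\succ_A(x\prec_A z)$; (AL4) $(x\succ_A y)\prec_A z=-(y\prec_A x)\prec_A z$. A bilinear form $\omega$ on an anti-pre-Leibniz algebra is invariant if $\omega(x\succ_A y,z)=\omega(y,x\circ_A z)$ and $\omega(x\prec_A y,z)=-\omega(x,y\circ_A z+z\circ_A y)$ for all $x,y,z$. A quadratic anti-pre-Leibniz algebra is an anti-pre-Leibniz algebra with a nondegenerate skew-symmetric invariant bilinear form. *)

theory Defs
  imports Main "HOL.Vector_Spaces"
begin

definition fin_dim_vs :: "('k::field \<Rightarrow> 'v::ab_group_add \<Rightarrow> 'v) \<Rightarrow> bool" where
  "fin_dim_vs sc \<longleftrightarrow> (\<exists>B. finite_dimensional_vector_space sc B)"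

definition bilinear_op :: "('k::field \<Rightarrow> 'v::ab_group_add \<Rightarrow> 'v) \<Rightarrow> ('v \<Rightarrow> 'v \<Rightarrow> 'v) \<Rightarrow> bool" where
  "bilinear_op sc m \<longleftrightarrow>
     (\<forall>x. Vector_Spaces.linear sc sc (m x)) \<and> (\<forall>y. Vector_Spaces.linear sc sc (\<lambda>x. m x y))"

definition bilinear_form :: "('k::field \<Rightarrow> 'v::ab_group_add \<Rightarrow> 'v) \<Rightarrow> ('v \<Rightarrow> 'v \<Rightarrow> 'k) \<Rightarrow> bool" where
  "bilinear_form sc w \<longleftrightarrow>
     (\<forall>x. Vector_Spaces.linear sc (*) (w x)) \<and> (\<forall>y. Vector_Spaces.linear sc (*) (\<lambda>x. w x y))"

definition nondegenerate :: "('v::ab_group_add \<Rightarrow> 'v \<Rightarrow> 'k::field) \<Rightarrow> bool" where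
  "nondegenerate w \<longleftrightarrow> (\<forall>x. (\<forall>y. w x y = 0) \<longrightarrow> x = 0)"

definition skew_symmetric :: "('v \<Rightarrow> 'v \<Rightarrow> 'k::ab_group_add) \<Rightarrow> bool" where
  "skew_symmetric w \<longleftrightarrow> (\<forall>x y. w x y = - w y x)"

definition leibniz_algebra :: "('k::field \<Rightarrow> 'v::ab_group_add \<Rightarrow> 'v) \<Rightarrow> ('v \<Rightarrow> 'v \<Rightarrow> 'v) \<Rightarrow> bool" where
  "leibniz_algebra sc m \<longleftrightarrow> vector_space sc \<and> bilinear_op sc m \<and>
     (\<forall>x y z. m x (m y z) = m (m x y) z + m y (m x z))"

definition two_cocycle :: "('v::ab_group_add \<Rightarrow> 'v \<Rightarrow> 'v) \<Rightarrow> ('v \<Rightarrow> 'v \<Rightarrow> 'k::ab_group_add) \<Rightarrow> bool" where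
  "two_cocycle m w \<longleftrightarrow> (\<forall>x y z. w z (m x y) = w x (m y z + m z y) - w y (m x z))"

definition anti_pre_leibniz :: "('k::field \<Rightarrow> 'v::ab_group_add \<Rightarrow> 'v) \<Rightarrow>
    ('v \<Rightarrow> 'v \<Rightarrow> 'v) \<Rightarrow> ('v \<Rightarrow> 'v \<Rightarrow> 'v) \<Rightarrow> bool" where
  "anti_pre_leibniz sc sr pl \<longleftrightarrow> vector_space sc \<and> bilinear_op sc sr \<and> bilinear_op sc pl \<and>
     (let c = (\<lambda>x y. sr x y + pl x y) in
     (\<forall>x y z. pl (c x y) z = sr x (c y z) - sr y (c x z)) \<and>
     (\<forall>x y z. sr (c x y) z = sr y (sr x z) - sr x (sr y z)) \<and>
     (\<forall>x y z. pl x (c y z) = pl (sr y x) z - sr y (pl x z)) \<and>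
     (\<forall>x y z. pl (sr x y) z = - pl (pl y x) z))"

definition apl_invariant :: "('v::ab_group_add \<Rightarrow> 'v \<Rightarrow> 'v) \<Rightarrow> ('v \<Rightarrow> 'v \<Rightarrow> 'v) \<Rightarrow>
    ('v \<Rightarrow> 'v \<Rightarrow> 'k::ab_group_add) \<Rightarrow> bool" where
  "apl_invariant sr pl w \<longleftrightarrow>
     (\<forall>x y z. w (sr x y) z = w y (sr x z + pl x z)) \<and>
     (\<forall>x y z. w (pl x y) z = - w x ((sr y z + pl y z) + (sr z y + pl z y)))"

definition quadratic_apl :: "('k::field \<Rightarrow> 'v::ab_group_add \<Rightarrow> 'v) \<Rightarrow>
    ('v \<Rightarrow> 'v \<Rightarrow> 'v) \<Rightarrow> ('v \<Rightarrow> 'v \<Rightarrow> 'v) \<Rightarrow> ('v \<Rightarrow> 'v \<Rightarrow> 'k) \<Rightarrow> bool" where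
  "quadratic_apl sc sr pl w \<longleftrightarrow> anti_pre_leibniz sc sr pl \<and> bilinear_form sc w \<and>
     nondegenerate w \<and> skew_symmetric w \<and> apl_invariant sr pl w"

end

theory Submission
  imports Defs
begin

lemma lin_add: "Vector_Spaces.linear s1 s2 f \<Longrightarrow> f (x + y) = f x + f y"
  by (simp add: linear_iff)
lemma lin_scale: "Vector_Spaces.linear s1 s2 f \<Longrightarrow> f (s1 c x) = s2 c (f x)"
  by (simp add: linear_iff)
lemma lin_diff: "Vector_Spaces.linear s1 s2 f \<Longrightarrow> f (x - y) = f x - f y"
  using lin_add[of s1 s2 f "x - y" y] by (simp add: eq_diff_eq)
lemma lin_neg: "Vector_Spaces.linear s1 s2 f \<Longrightarrow> f (- x) = - f x"
  using lin_diff[of s1 s2 f 0 x] lin_diff[of s1 s2 f 0 0] by simp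

lemma riesz:
  fixes sc :: "'k::field \<Rightarrow> 'v::ab_group_add \<Rightarrow> 'v" and w :: "'v \<Rightarrow> 'v \<Rightarrow> 'k"
  assumes fd: "finite_dimensional_vector_space sc B" and bf: "bilinear_form sc w"
    and nd: "nondegenerate w" and lf: "Vector_Spaces.linear sc (*) f"
  shows "\<exists>v. \<forall>z. w v z = f z"
proof -
  interpret fd: finite_dimensional_vector_space sc B by fact
  have wl: "Vector_Spaces.linear sc (*) (\<lambda>x. w x y)" for y using bf unfolding bilinear_form_def by blast
  have wr: "Vector_Spaces.linear sc (*) (w x)" for x using bf unfolding bilinear_form_def by blast
  have wl_add: "w (a + b) c = w a c + w b c" for a b c using lin_add[OF wl] .
  have wl_scale: "w (sc k a) c = k * w a c" for k a c using lin_scale[OF wl] .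
  have wl_diff: "w (a - b) c = w a c - w b c" for a b c using lin_diff[OF wl] .
  have vs: "vector_space sc" using lf by (simp add: linear_iff)
  define T where "T v = (\<Sum>b\<in>B. sc (w v b) b)" for v
  have linT: "Vector_Spaces.linear sc sc T"
    unfolding linear_iff
  proof (intro conjI allI)
    show "vector_space sc" by fact
    show "vector_space sc" by fact
    show "T (x + y) = T x + T y" for x y
      unfolding T_def wl_add fd.scale_left_distrib by (simp add: sum.distrib)
    show "T (sc c x) = sc c (T x)" for c x
      unfolding T_def wl_scale by (simp add: fd.scale_sum_right)
  qed
  have T0: "\<forall>z. w x z = 0" if "T x = 0" for x
  proof -
    have "\<forall>b\<in>B. w x b = 0"
      using fd.independent_Basis that unfolding fd.independent_explicit T_def by blast
    moreover have "module_hom sc (*) (w x)" using wr[of x] by (simp add: module_hom_iff_linear)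
    ultimately show ?thesis
      using module_hom.eq_0_on_span[of sc "(*)" "w x" B] fd.span_Basis by auto
  qed
  have "inj T"
  proof (rule injI)
    fix x y assume "T x = T y"
    then have "T (x - y) = 0" using lin_diff[OF linT] by simp
    then have "\<forall>z. w (x - y) z = 0" using T0 by blast
    then have "x - y = 0" using nd unfolding nondegenerate_def by blast
    then show "x = y" by simp
  qed
  then have "surj T" using fd.linear_inj_imp_surj linT by blast
  then obtain v where v: "T v = (\<Sum>b\<in>B. sc (f b) b)" by (metis surjD)
  have "(\<Sum>b\<in>B. sc (w v b - f b) b) = 0"
    using v unfolding T_def fd.scale_left_diff_distrib by (simp add: sum_subtractf)
  then have vb: "\<forall>b\<in>B. w v b - f b = 0"
  proof -
    have "\<forall>c. (\<Sum>v\<in>B. sc (c v) v) = 0 \<longrightarrow> (\<forall>v\<in>B. c v = 0)"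
      using fd.independent_Basis unfolding fd.independent_explicit by blast
    from this[rule_format, of "\<lambda>b. w v b - f b"] show ?thesis using \<open>(\<Sum>b\<in>B. sc (w v b - f b) b) = 0\<close> by blast
  qed
  have "Vector_Spaces.linear sc (*) (\<lambda>z. w v z - f z)"
    using lf wr[of v] unfolding linear_iff by (simp add: algebra_simps)
  then have "module_hom sc (*) (\<lambda>z. w v z - f z)" by (simp add: module_hom_iff_linear)
  then have "\<forall>z. w v z - f z = 0"
    using module_hom.eq_0_on_span[of sc "(*)" "\<lambda>z. w v z - f z" B] fd.span_Basis vb by auto
  then show ?thesis by auto
qed
lemma grp_aux:
  fixes P1 S1 S2 Q a b R1 u1 v1 R2 u2 v2 n :: "'a::ab_group_add"
  assumes "P1 = S1 - S2" "Q = a - b" "R1 = u1 - v1" "R2 = u2 - v2" "u1 = - n"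
    "S2 = a + v1" "S1 = b + v2" "P1 = u2 + n"
  shows "S1 + R1 = (Q + P1) + (S2 + R2)"
proof -
  have h: "u2 = b + v2 - (a + v1) - n" using assms(1,6,7,8) by (simp add: eq_diff_eq)
  show ?thesis unfolding assms(2-7) assms(8) h by (simp add: algebra_simps)
qed

lemma partA:
  fixes sc :: "'k::field \<Rightarrow> 'v::ab_group_add \<Rightarrow> 'v" and w :: "'v \<Rightarrow> 'v \<Rightarrow> 'k"
  assumes q: "quadratic_apl sc sr pl w"
  shows "leibniz_algebra sc (\<lambda>x y. sr x y + pl x y) \<and> bilinear_form sc w \<and>
        nondegenerate w \<and> skew_symmetric w \<and> two_cocycle (\<lambda>x y. sr x y + pl x y) w"
proof -
  have apl: "anti_pre_leibniz sc sr pl" and bf: "bilinear_form sc w" and nd: "nondegenerate w"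
    and sk: "skew_symmetric w" and inv: "apl_invariant sr pl w"
    using q unfolding quadratic_apl_def by auto
  have vs: "vector_space sc" and bsr: "bilinear_op sc sr" and bpl: "bilinear_op sc pl"
    using apl unfolding anti_pre_leibniz_def by auto
  have AL1: "pl (sr x y + pl x y) z = sr x (sr y z + pl y z) - sr y (sr x z + pl x z)"
    and AL2: "sr (sr x y + pl x y) z = sr y (sr x z) - sr x (sr y z)"
    and AL3: "pl x (sr y z + pl y z) = pl (sr y x) z - sr y (pl x z)"
    and AL4: "pl (sr x y) z = - pl (pl y x) z" for x y z
    using apl unfolding anti_pre_leibniz_def Let_def by auto
  have srr: "Vector_Spaces.linear sc sc (sr x)" and srl: "Vector_Spaces.linear sc sc (\<lambda>x. sr x y)"
    and plr: "Vector_Spaces.linear sc sc (pl x)" and pll: "Vector_Spaces.linear sc sc (\<lambda>x. pl x y)"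
    for x y using bsr bpl unfolding bilinear_op_def by auto
  have sra: "sr x (a + b) = sr x a + sr x b" for x a b using lin_add[OF srr] .
  have pla: "pl (a + b) x = pl a x + pl b x" for x a b using lin_add[OF pll] .
  have bop: "bilinear_op sc (\<lambda>x y. sr x y + pl x y)"
    unfolding bilinear_op_def linear_iff
    using vs lin_add[OF srr] lin_add[OF srl] lin_add[OF plr] lin_add[OF pll]
      lin_scale[OF srr] lin_scale[OF srl] lin_scale[OF plr] lin_scale[OF pll]
      vector_space.vector_space_assms(1)[OF vs, symmetric]
    by (simp add: add_ac)
  have leib: "sr x (sr y z + pl y z) + pl x (sr y z + pl y z) =
     (sr (sr x y + pl x y) z + pl (sr x y + pl x y) z) + (sr y (sr x z + pl x z) + pl y (sr x z + pl x z))"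
    for x y z
  proof -
    note e = AL1[of x y z] AL2[of x y z] AL3[of x y z] AL3[of y x z] AL4[of y x z]
      sra[of y "sr x z" "pl x z"] sra[of x "sr y z" "pl y z"] pla[of "sr x y" "pl x y" z]
    show ?thesis by (rule grp_aux[OF e])
  qed
  have wl: "Vector_Spaces.linear sc (*) (\<lambda>x. w x y)" for y using bf unfolding bilinear_form_def by blast
  have coc: "two_cocycle (\<lambda>x y. sr x y + pl x y) w"
    unfolding two_cocycle_def
  proof (intro allI)
    fix x y z
    have "w z (sr x y + pl x y) = - w (sr x y + pl x y) z" using sk unfolding skew_symmetric_def by blast
    also have "\<dots> = - (w (sr x y) z + w (pl x y) z)" using lin_add[OF wl] by simp
    also have "\<dots> = w x (sr y z + pl y z + (sr z y + pl z y)) - w y (sr x z + pl x z)"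
      using inv unfolding apl_invariant_def by simp
    finally show "w z (sr x y + pl x y) = w x (sr y z + pl y z + (sr z y + pl z y)) - w y (sr x z + pl x z)" .
  qed
  show ?thesis unfolding leibniz_algebra_def using vs bop leib bf nd sk coc by blast
qed
lemma AL1_core:
 fixes w :: "'v::ab_group_add \<Rightarrow> 'v \<Rightarrow> 'k::field_char_0"
 assumes wr_add: "\<And>a b c. w a (b + c) = w a b + w a c"
 and skew: "\<And>a b. w a b = - w b a"
 and coc0: "\<And>x y z. w z (m x y) = w x (m y z + m z y) - w y (m x z)"
 and leib: "\<And>x y z. m x (m y z) = m (m x y) z + m y (m x z)"
 shows "w (m y z) (m x t) - w (m x z) (m y t) + w (m x y) (m z t) + w (m x y) (m t z) = 0"
proof -
  have coc: "w z (m x y) = w x (m y z) + w x (m z y) - w y (m x z)" for x y z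
    using coc0[of z x y] unfolding wr_add .
  have leibw: "w u (m a (m b c)) = w u (m (m a b) c) + w u (m b (m a c))" for u a b c
    using arg_cong[OF leib[of a b c], of "w u"] unfolding wr_add .
  note f = coc[of "t" "(m x y)" "z"] coc[of "t" "y" "(m x z)"] coc[of "z" "y" "(m x t)"] coc[of "t" "x" "(m y z)"] coc[of "z" "x" "(m y t)"] coc[of "y" "x" "(m z t)"] coc[of "y" "x" "(m t z)"] leibw[of x y z t] leibw[of x y t z] leibw[of x z t y] leibw[of x t z y] leibw[of y x z t] leibw[of y x t z] leibw[of z x y t] leibw[of t x y z]
  note sk = skew[of "(m x y)" "(m t z)"] skew[of "(m y t)" "(m x z)"] skew[of "(m y z)" "(m x t)"] skew[of "(m z t)" "(m x y)"] skew[of "t" "(m (m x y) z)"] skew[of "t" "(m x (m y z))"] skew[of "t" "(m y (m x z))"] skew[of "x" "(m (m t z) y)"] skew[of "x" "(m (m y t) z)"] skew[of "x" "(m (m y z) t)"] skew[of "x" "(m (m z t) y)"] skew[of "x" "(m t (m y z))"] skew[of "x" "(m t (m z y))"] skew[of "x" "(m y (m t z))"] skew[of "x" "(m y (m z t))"] skew[of "x" "(m z (m t y))"] skew[of "x" "(m z (m y t))"] skew[of "y" "(m (m x t) z)"] skew[of "y" "(m (m x z) t)"] skew[of "y" "(m t (m x z))"] skew[of "y" "(m x (m t z))"] skew[of "y" "(m x (m z t))"] skew[of "y" "(m z (m x t))"] skew[of "z" "(m (m x y) t)"] skew[of "z" "(m x (m y t))"] skew[of "z" "(m y (m x t))"]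
  have "2 * (w (m y z) (m x t) - w (m x z) (m y t) + w (m x y) (m z t) + w (m x y) (m t z)) = - (w t (m (m x y) z) - (w (m x y) (m z t) + w (m x y) (m t z) - w z (m (m x y) t))) - (w t (m y (m x z)) - (w y (m (m x z) t) + w y (m t (m x z)) - w (m x z) (m y t))) - (w z (m y (m x t)) - (w y (m (m x t) z) + w y (m z (m x t)) - w (m x t) (m y z))) + (w t (m x (m y z)) - (w x (m (m y z) t) + w x (m t (m y z)) - w (m y z) (m x t))) + (w z (m x (m y t)) - (w x (m (m y t) z) + w x (m z (m y t)) - w (m y t) (m x z))) - (w y (m x (m z t)) - (w x (m (m z t) y) + w x (m y (m z t)) - w (m z t) (m x y))) - (w y (m x (m t z)) - (w x (m (m t z) y) + w x (m y (m t z)) - w (m t z) (m x y))) - (w x (m y (m z t)) - (w x (m (m y z) t) + w x (m z (m y t)))) - (w x (m y (m t z)) - (w x (m (m y t) z) + w x (m t (m y z)))) + (w x (m z (m t y)) - (w x (m (m z t) y) + w x (m t (m z y)))) + (w x (m t (m z y)) - (w x (m (m t z) y) + w x (m z (m t y)))) + (w y (m x (m z t)) - (w y (m (m x z) t) + w y (m z (m x t)))) + (w y (m x (m t z)) - (w y (m (m x t) z) + w y (m t (m x z)))) - (w z (m x (m y t)) - (w z (m (m x y) t) + w z (m y (m x t)))) - (w t (m x (m y z)) - (w t (m (m x y) z) + w t (m y (m x z))))"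
    unfolding sk by (simp add: algebra_simps)
  also have "\<dots> = 0"
    by (simp only: f[THEN right_minus_eq[THEN iffD2]]) simp
  finally show ?thesis by (simp only: mult_eq_0_iff) simp
qed

lemma partB_unique:
  fixes sc :: "'k::field_char_0 \<Rightarrow> 'v::ab_group_add \<Rightarrow> 'v" and w :: "'v \<Rightarrow> 'v \<Rightarrow> 'k"
  assumes L: "leibniz_algebra sc m" and bf: "bilinear_form sc w" and nd: "nondegenerate w"
    and skw: "skew_symmetric w" and cc: "two_cocycle m w"
    and hsr: "\<forall>x y z. w (sr x y) z = w y (m x z)"
    and hpl: "\<forall>x y z. w (pl x y) z = - w x (m y z + m z y)"
  shows "(\<forall>x y. sr x y + pl x y = m x y) \<and> quadratic_apl sc sr pl w"
proof -
  have vs: "vector_space sc" and bm: "bilinear_op sc m"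
    and leib: "\<And>x y z. m x (m y z) = m (m x y) z + m y (m x z)"
    using L unfolding leibniz_algebra_def by blast+
  have wl: "Vector_Spaces.linear sc (*) (\<lambda>x. w x y)" for y using bf unfolding bilinear_form_def by blast
  have wr: "Vector_Spaces.linear sc (*) (w x)" for x using bf unfolding bilinear_form_def by blast
  have ml: "Vector_Spaces.linear sc sc (\<lambda>x. m x y)" for y using bm unfolding bilinear_op_def by blast
  have mr: "Vector_Spaces.linear sc sc (m x)" for x using bm unfolding bilinear_op_def by blast
  have wl_add: "w (a + b) c = w a c + w b c" for a b c using lin_add[OF wl] .
  have wl_scale: "w (sc k a) c = k * w a c" for k a c using lin_scale[OF wl] .
  have wl_diff: "w (a - b) c = w a c - w b c" for a b c using lin_diff[OF wl] .
  have wl_neg: "w (- a) c = - w a c" for a c using lin_neg[OF wl] .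
  have wr_add: "w c (a + b) = w c a + w c b" for a b c using lin_add[OF wr] .
  have wr_scale: "w c (sc k a) = k * w c a" for k a c using lin_scale[OF wr] .
  have wr_diff: "w c (a - b) = w c a - w c b" for a b c using lin_diff[OF wr] .
  have ml_add: "m (a + b) c = m a c + m b c" for a b c using lin_add[OF ml] .
  have ml_scale: "m (sc k a) c = sc k (m a c)" for k a c using lin_scale[OF ml] .
  have mr_add: "m c (a + b) = m c a + m c b" for a b c using lin_add[OF mr] .
  have mr_scale: "m c (sc k a) = sc k (m c a)" for k a c using lin_scale[OF mr] .
  have skew: "w a b = - w b a" for a b using skw unfolding skew_symmetric_def by blast
  have coc: "w z (m x y) = w x (m y z + m z y) - w y (m x z)" for x y z
    using cc unfolding two_cocycle_def by blast
  have sr: "w (sr x y) z = w y (m x z)" for x y z using hsr by blast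
  have pl: "w (pl x y) z = - w x (m y z + m z y)" for x y z using hpl by blast
  have eqW: "a = b" if "\<And>t. w a t = w b t" for a b
  proof -
    have "\<forall>t. w (a - b) t = 0" using that wl_diff by simp
    then have "a - b = 0" using nd unfolding nondegenerate_def by blast
    then show ?thesis by simp
  qed
  have S: "sr x y + pl x y = m x y" for x y
  proof (rule eqW)
    fix t
    show "w (sr x y + pl x y) t = w (m x y) t"
      unfolding wl_add sr pl skew[of "m x y" t] coc[of t x y] by simp
  qed
  have bsr: "bilinear_op sc sr"
    unfolding bilinear_op_def linear_iff
  proof (intro conjI allI vs)
    show "sr x (a + b) = sr x a + sr x b" for x a b
      by (rule eqW) (simp add: wl_add sr)
    show "sr x (sc k a) = sc k (sr x a)" for x k a
      by (rule eqW) (simp add: wl_scale sr)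
    show "sr (a + b) x = sr a x + sr b x" for x a b
      by (rule eqW) (simp add: wl_add sr ml_add wr_add)
    show "sr (sc k a) x = sc k (sr a x)" for x k a
      by (rule eqW) (simp add: wl_scale sr ml_scale wr_scale)
  qed
  have bpl: "bilinear_op sc pl"
    unfolding bilinear_op_def linear_iff
  proof (intro conjI allI vs)
    show "pl x (a + b) = pl x a + pl x b" for x a b
      by (rule eqW) (simp add: wl_add pl ml_add mr_add wr_add algebra_simps)
    show "pl x (sc k a) = sc k (pl x a)" for x k a
      by (rule eqW) (simp add: wl_scale pl ml_scale mr_scale wr_scale wr_add algebra_simps
          flip: vector_space.vector_space_assms(1)[OF vs])
    show "pl (a + b) x = pl a x + pl b x" for x a b
      by (rule eqW) (simp add: wl_add pl)
    show "pl (sc k a) x = sc k (pl a x)" for x k a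
      by (rule eqW) (simp add: wl_scale pl)
  qed
  have AL1: "pl (m x y) z = sr x (m y z) - sr y (m x z)" for x y z
  proof (rule eqW)
    fix t
    have "w (m y z) (m x t) - w (m x z) (m y t) + w (m x y) (m z t) + w (m x y) (m t z) = 0"
      by (rule AL1_core[of w m, OF wr_add skew coc leib])
    then show "w (pl (m x y) z) t = w (sr x (m y z) - sr y (m x z)) t"
      unfolding wl_diff sr pl wr_add by (simp add: algebra_simps eq_neg_iff_add_eq_0)
  qed
  have AL2: "sr (m x y) z = sr y (sr x z) - sr x (sr y z)" for x y z
    by (rule eqW) (simp add: wl_diff sr leib[of x y] wr_add)
  have V3: "m (m y z) t + m t (m y z) = m y (m z t + m t z) - (m z (m y t) + m (m y t) z)" for y z t
    using leib[of y z t] leib[of y t z] by (simp add: mr_add algebra_simps)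
  have AL3: "pl x (m y z) = pl (sr y x) z - sr y (pl x z)" for x y z
  proof (rule eqW)
    fix t
    show "w (pl x (m y z)) t = w (pl (sr y x) z - sr y (pl x z)) t"
      unfolding wl_diff sr pl V3 wr_diff by simp
  qed
  have zz: "m (m a a) c = 0" for a c using leib[of a a c] by simp
  have sym0: "m (m z t + m t z) c = 0" for z t c
  proof -
    have "m (m (z + t) (z + t)) c = 0" by (rule zz)
    then show ?thesis using zz[of z c] zz[of t c] by (simp add: ml_add mr_add add.commute)
  qed
  have sw: "m (m t z) c = - m (m z t) c" for z t c
    using sym0[of z t c] unfolding ml_add by (simp add: eq_neg_iff_add_eq_0 add.commute)
  have wr_neg: "w c (- a) = - w c a" for a c using lin_neg[OF wr] .
  have AL4: "pl (sr x y) z = - pl (pl y x) z" for x y z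
  proof (rule eqW)
    fix t
    show "w (pl (sr x y) z) t = w (- pl (pl y x) z) t"
      by (simp add: wl_neg sr pl sym0)
  qed
  have apl: "anti_pre_leibniz sc sr pl"
    unfolding anti_pre_leibniz_def Let_def S using vs bsr bpl AL1 AL2 AL3 AL4 by blast
  have inv: "apl_invariant sr pl w"
    unfolding apl_invariant_def S using sr pl by blast
  show ?thesis using S apl inv bf nd skw unfolding quadratic_apl_def by blast
qed

theorem proposition2p22:
  fixes sc :: "'k::field_char_0 \<Rightarrow> 'v::ab_group_add \<Rightarrow> 'v"
  assumes "fin_dim_vs sc"
  shows
    "(\<forall>sr pl (w :: 'v \<Rightarrow> 'v \<Rightarrow> 'k). quadratic_apl sc sr pl w \<longrightarrow>
        leibniz_algebra sc (\<lambda>x y. sr x y + pl x y) \<and> bilinear_form sc w \<and>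
        nondegenerate w \<and> skew_symmetric w \<and> two_cocycle (\<lambda>x y. sr x y + pl x y) w)
     \<and>
     (\<forall>m (w :: 'v \<Rightarrow> 'v \<Rightarrow> 'k). leibniz_algebra sc m \<and> bilinear_form sc w \<and>
        nondegenerate w \<and> skew_symmetric w \<and> two_cocycle m w \<longrightarrow>
        (\<exists>sr pl. (\<forall>x y z. w (sr x y) z = w y (m x z)) \<and>
                 (\<forall>x y z. w (pl x y) z = - w x (m y z + m z y))) \<and>
        (\<forall>sr pl. (\<forall>x y z. w (sr x y) z = w y (m x z)) \<and>
                 (\<forall>x y z. w (pl x y) z = - w x (m y z + m z y)) \<longrightarrow>
           (\<forall>x y. sr x y + pl x y = m x y) \<and> quadratic_apl sc sr pl w))"
proof -
  obtain B where fd: "finite_dimensional_vector_space sc B"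
    using assms unfolding fin_dim_vs_def by blast
  show ?thesis
  proof (rule conjI)
    show "\<forall>sr pl (w :: 'v \<Rightarrow> 'v \<Rightarrow> 'k). quadratic_apl sc sr pl w \<longrightarrow>
        leibniz_algebra sc (\<lambda>x y. sr x y + pl x y) \<and> bilinear_form sc w \<and>
        nondegenerate w \<and> skew_symmetric w \<and> two_cocycle (\<lambda>x y. sr x y + pl x y) w"
      using partA by blast
  next
    show "\<forall>m (w :: 'v \<Rightarrow> 'v \<Rightarrow> 'k). leibniz_algebra sc m \<and> bilinear_form sc w \<and>
        nondegenerate w \<and> skew_symmetric w \<and> two_cocycle m w \<longrightarrow>
        (\<exists>sr pl. (\<forall>x y z. w (sr x y) z = w y (m x z)) \<and>
                 (\<forall>x y z. w (pl x y) z = - w x (m y z + m z y))) \<and>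
        (\<forall>sr pl. (\<forall>x y z. w (sr x y) z = w y (m x z)) \<and>
                 (\<forall>x y z. w (pl x y) z = - w x (m y z + m z y)) \<longrightarrow>
           (\<forall>x y. sr x y + pl x y = m x y) \<and> quadratic_apl sc sr pl w)"
    proof (intro allI impI)
    fix m and w :: "'v \<Rightarrow> 'v \<Rightarrow> 'k"
    assume H: "leibniz_algebra sc m \<and> bilinear_form sc w \<and>
        nondegenerate w \<and> skew_symmetric w \<and> two_cocycle m w"
    then have L: "leibniz_algebra sc m" and bf: "bilinear_form sc w" and nd: "nondegenerate w"
      by blast+
    have bm: "bilinear_op sc m" using L unfolding leibniz_algebra_def by blast
    have wr: "Vector_Spaces.linear sc (*) (w x)" for x using bf unfolding bilinear_form_def by blast
    have ml: "Vector_Spaces.linear sc sc (\<lambda>x. m x y)" for y using bm unfolding bilinear_op_def by blast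
    have mr: "Vector_Spaces.linear sc sc (m x)" for x using bm unfolding bilinear_op_def by blast
    have vsk: "vector_space ((*) :: 'k \<Rightarrow> 'k \<Rightarrow> 'k)" using wr[of 0] by (simp add: linear_iff)
    have vs: "vector_space sc" using L unfolding leibniz_algebra_def by blast
    have e1: "\<exists>v. \<forall>z. w v z = w y (m x z)" for x y
    proof (rule riesz[OF fd bf nd])
      have "Vector_Spaces.linear sc (*) (w y \<circ> m x)"
        by (rule Vector_Spaces.linear_compose[OF mr wr])
      then show "Vector_Spaces.linear sc (*) (\<lambda>z. w y (m x z))" by (simp add: o_def)
    qed
    have e2: "\<exists>v. \<forall>z. w v z = - w x (m y z + m z y)" for x y
    proof (rule riesz[OF fd bf nd])
      show "Vector_Spaces.linear sc (*) (\<lambda>z. - w x (m y z + m z y))"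
        unfolding linear_iff
      proof (intro conjI allI vs vsk)
        show "- w x (m y (a + b) + m (a + b) y) = - w x (m y a + m a y) + - w x (m y b + m b y)" for a b
          by (simp add: lin_add[OF mr] lin_add[OF ml] lin_add[OF wr] algebra_simps)
        show "- w x (m y (sc c a) + m (sc c a) y) = c * - w x (m y a + m a y)" for c a
          by (simp add: lin_scale[OF mr] lin_scale[OF ml] lin_scale[OF wr] lin_add[OF wr] algebra_simps)
      qed
    qed
    have "\<forall>x. \<exists>g. \<forall>y z. w (g y) z = w y (m x z)"
      using e1 by (auto intro: choice)
    then have "\<exists>sr. \<forall>x y z. w (sr x y) z = w y (m x z)" by (rule choice)
    moreover have "\<forall>x. \<exists>g. \<forall>y z. w (g y) z = - w x (m y z + m z y)"
      using e2 by (auto intro: choice)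
    then have "\<exists>pl. \<forall>x y z. w (pl x y) z = - w x (m y z + m z y)" by (rule choice)
    ultimately have EX: "\<exists>sr pl. (\<forall>x y z. w (sr x y) z = w y (m x z)) \<and>
                 (\<forall>x y z. w (pl x y) z = - w x (m y z + m z y))" by blast
    show "(\<exists>sr pl. (\<forall>x y z. w (sr x y) z = w y (m x z)) \<and>
                 (\<forall>x y z. w (pl x y) z = - w x (m y z + m z y))) \<and>
        (\<forall>sr pl. (\<forall>x y z. w (sr x y) z = w y (m x z)) \<and>
                 (\<forall>x y z. w (pl x y) z = - w x (m y z + m z y)) \<longrightarrow>
           (\<forall>x y. sr x y + pl x y = m x y) \<and> quadratic_apl sc sr pl w)"
      using EX partB_unique[of sc m w] H by blast
    qed
  qed
qed

end
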